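(* Assume $r$ is not a codeword of the GRS code (equivalently $\deg R\ge k$). Let $A_{s,\ell}$ be the $(\ell+1)\times(\ell+1)$ matrix over $\mathbb F_q[X]$ whose $t$-th row ($t=0,\dots,\ell$) is the coefficient vector of $P^{(t)}$, where $P^{(t)}=G^{s-t}(Y-R)^t$ for $0\le t<s$ and $P^{(t)}=Y^{t-s}(Y-R)^s$ for $s\le t\le\ell$. Then $\Delta(A_{s,\ell}W_\ell)=\tfrac12(2\ell-s+1)s(\deg R-k+1)\le \ell s(n-k)$.
   Context: Let $\mathbb F_q$ be a finite field, $1\le k<n<q$, $\alpha_0,\dots,\alpha_{n-1}$ distinct nonzero elements of $\mathbb F_q$, $w_0,\dots,w_{n-1}$ nonzero elements of $\mathbb F_q$. The GRS code is $\{(w_0f(\alpha_0),\dots,w_{n-1}f(\alpha_{n-1})): f\in\mathbb F_q[X],\deg f<k\}$. Let $r\in\mathbb F_q^n$, $r_i'=r_i/w_i$, $G(X)=\prod_i(X-\alpha_i)$ and $R(X)$ the unique polynomial of degree $<n$ with $R(\alpha_i)=r_i'$. Let $s\le\ell$ be positive integers. A polynomial $\sum_{t=0}^\ell Q_t(X)Y^t$ has coefficient vector $(Q_0,\dots,Q_\ell)$. $W_\ell=\mathrm{diag}(1,X^{k-1},\dots,X^{\ell(k-1)})$. For a square matrix $V$ over $\mathbb F_q[X]$ with rows $v_i$, $\deg v_i=\max_j\deg v_{i,j}$, $\deg V=\sum_i\deg v_i$ and $\Delta(V)=\deg V-\deg\det V$. *)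

theory Defs
  imports "HOL-Computational_Algebra.Polynomial" "Jordan_Normal_Form.Determinant"
begin

definition GRS_codeword :: "nat \<Rightarrow> nat \<Rightarrow> (nat \<Rightarrow> 'a::field) \<Rightarrow> (nat \<Rightarrow> 'a) \<Rightarrow> (nat \<Rightarrow> 'a) \<Rightarrow> bool" where
  "GRS_codeword n k alpha w c \<longleftrightarrow> (\<exists>f. degree f < k \<and> (\<forall>i<n. c i = w i * poly f (alpha i)))"

definition Gpoly :: "nat \<Rightarrow> (nat \<Rightarrow> 'a::field) \<Rightarrow> 'a poly" where
  "Gpoly n alpha = (\<Prod>i<n. [:- alpha i, 1:])"

text \<open>Bivariate polynomials sum_t Q_t(X) Y^t are elements of type 'a poly poly
  (outer variable Y); the coefficient vector is (coeff P 0, ..., coeff P l).\<close>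
definition Pt :: "nat \<Rightarrow> 'a::field poly \<Rightarrow> 'a poly \<Rightarrow> nat \<Rightarrow> 'a poly poly" where
  "Pt s G R t = (if t < s then smult (G ^ (s - t)) ([:- R, 1:] ^ t)
                 else monom 1 (t - s) * [:- R, 1:] ^ s)"

definition A_mat :: "nat \<Rightarrow> nat \<Rightarrow> 'a::field poly \<Rightarrow> 'a poly \<Rightarrow> 'a poly mat" where
  "A_mat s l G R = mat (l+1) (l+1) (\<lambda>(t,j). coeff (Pt s G R t) j)"

definition W_mat :: "nat \<Rightarrow> nat \<Rightarrow> 'a::field poly mat" where
  "W_mat l k = mat (l+1) (l+1) (\<lambda>(i,j). if i = j then monom 1 (i * (k - 1)) else 0)"

definition row_deg :: "'a::zero poly mat \<Rightarrow> nat \<Rightarrow> nat" where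
  "row_deg V i = Max {degree (V $$ (i,j)) | j. j < dim_col V}"

definition mat_deg :: "'a::zero poly mat \<Rightarrow> nat" where
  "mat_deg V = (\<Sum>i<dim_row V. row_deg V i)"

definition Delta :: "'a::comm_ring_1 poly mat \<Rightarrow> int" where
  "Delta V = int (mat_deg V) - int (degree (det V))"

end

theory Submission
  imports Defs
begin

lemma coeff_Q_deg:
  fixes R :: "'a::field poly"
  shows "degree (coeff ([:-R,1:]^t) j) \<le> (t-j)*degree R"
proof (induction t arbitrary: j)
  case 0
  then show ?case by (simp add: coeff_1 split: if_splits)
next
  case (Suc t)
  define p where "p = [:-R,1:]^t"
  have dp: "degree p = t" unfolding p_def by (rule degree_linear_power)
  have e: "[:-R,1:]^Suc t = smult (-R) p + pCons 0 p"
    unfolding p_def by (simp add: mult_pCons_left)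
  show ?case
  proof (cases j)
    case 0
    have "degree (coeff ([:-R,1:]^Suc t) j) = degree (-R * coeff p 0)"
      using 0 e by simp
    also have "\<dots> \<le> degree R + degree (coeff p 0)"
      by (metis degree_minus degree_mult_le mult_minus_left)
    also have "\<dots> \<le> degree R + t * degree R" using Suc.IH[of 0] p_def by simp
    finally show ?thesis using 0 by simp
  next
    case (Suc m)
    have c: "coeff ([:-R,1:]^Suc t) j = -R * coeff p (Suc m) + coeff p m"
      using Suc e by simp
    show ?thesis
    proof (cases "m < t")
      case True
      have "degree (-R * coeff p (Suc m)) \<le> degree R + degree (coeff p (Suc m))"
        by (metis degree_minus degree_mult_le mult_minus_left)
      also have "\<dots> \<le> degree R + (t - Suc m) * degree R" using Suc.IH[of "Suc m"] p_def by simp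
      also have "\<dots> = (t - m) * degree R" using True
        by (metis Suc_diff_Suc mult_Suc)
      finally have 1: "degree (-R * coeff p (Suc m)) \<le> (t - m) * degree R" .
      have 2: "degree (coeff p m) \<le> (t - m) * degree R" using Suc.IH[of m] p_def by simp
      have "degree (coeff ([:-R,1:]^Suc t) j) \<le> max (degree (-R * coeff p (Suc m))) (degree (coeff p m))"
        unfolding c by (rule degree_add_le_max)
      then show ?thesis using 1 2 Suc by simp
    next
      case False
      then have "coeff p (Suc m) = 0" using dp by (simp add: coeff_eq_0)
      then show ?thesis using c Suc.IH[of m] p_def Suc by simp
    qed
  qed
qed

lemma coeff_Q_top: "coeff ([:-R,1:]^t) t = (1::'a::field poly)"
proof -
  have "coeff ([:-R,1:]^t) t = lead_coeff ([:-R,1:]^t)" by (simp add: degree_linear_power)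
  also have "\<dots> = 1" by (simp add: lead_coeff_power)
  finally show ?thesis .
qed

lemma coeff_Q_0: "coeff ([:-R,1:]^t) 0 = ((-R)^t :: 'a::field poly)"
  by (simp add: coeff_0_power)

lemma coeff_Q_gt: "t < j \<Longrightarrow> coeff ([:-R,1:]^t) j = (0::'a::field poly)"
  by (simp add: coeff_eq_0 degree_linear_power)


lemma entry_AW:
  assumes "t < l+1" "j < l+1"
  shows "(A_mat s l G R * W_mat l k) $$ (t,j) = coeff (Pt s G R t) j * monom 1 (j*(k-1))"
proof -
  have "(A_mat s l G R * W_mat l k) $$ (t,j) =
     (\<Sum>i\<in>{0..<l+1}. coeff (Pt s G R t) i * (if i = j then monom 1 (i*(k-1)) else 0))"
    using assms by (simp add: A_mat_def W_mat_def scalar_prod_def)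
  also have "\<dots> = (\<Sum>i\<in>{0..<l+1}. if i = j then coeff (Pt s G R t) i * monom 1 (i*(k-1)) else 0)"
    by (rule sum.cong) auto
  also have "\<dots> = coeff (Pt s G R t) j * monom 1 (j*(k-1))"
    using assms by (simp add: sum.delta)
  finally show ?thesis .
qed

lemma deg_mult_monom: "degree (c * monom 1 m) = (if c = 0 then 0 else degree c + m)"
  for c :: "'a::field poly"
  by (simp add: degree_mult_eq degree_monom_eq)

definition Fdeg :: "nat \<Rightarrow> nat \<Rightarrow> nat \<Rightarrow> nat \<Rightarrow> nat \<Rightarrow> nat" where
  "Fdeg s n d k t = (if t < s then (s-t)*n + t*d else s*d + (t-s)*(k-1))"

lemma coeffP_bound:
  fixes G R :: "'a::field poly"
  assumes "k - 1 \<le> degree R" "coeff (Pt s G R t) j \<noteq> 0"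
  shows "degree (coeff (Pt s G R t) j) + j*(k-1) \<le> Fdeg s (degree G) (degree R) k t"
proof (cases "t < s")
  case True
  have c: "coeff (Pt s G R t) j = G^(s-t) * coeff ([:-R,1:]^t) j"
    using True by (simp add: Pt_def)
  have jt: "j \<le> t" using assms(2) c coeff_Q_gt[of t j R] by (cases "t < j") auto
  have "degree (coeff (Pt s G R t) j) \<le> degree (G^(s-t)) + degree (coeff ([:-R,1:]^t) j)"
    unfolding c by (rule degree_mult_le)
  also have "\<dots> \<le> (s-t)*degree G + (t-j)*degree R"
    using coeff_Q_deg[of R t j] degree_power_le[of G "s-t"] by (simp add: mult.commute add_mono)
  finally have 1: "degree (coeff (Pt s G R t) j) \<le> (s-t)*degree G + (t-j)*degree R" .
  have 2: "j*(k-1) \<le> j * degree R" using assms(1) by (rule mult_le_mono2)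
  have 3: "(t-j)*degree R + j*degree R = t*degree R" using jt
    by (metis add_mult_distrib le_add_diff_inverse2)
  have "Fdeg s (degree G) (degree R) k t = (s-t)*degree G + t*degree R"
    using True unfolding Fdeg_def by simp
  then show ?thesis using 1 2 3 by linarith
next
  case False
  have c: "coeff (Pt s G R t) j = (if j < t - s then 0 else coeff ([:-R,1:]^s) (j - (t-s)))"
    using False by (simp add: Pt_def coeff_monom_mult)
  have j1: "t - s \<le> j" using assms(2) c by (cases "j < t - s") auto
  then have c2: "coeff (Pt s G R t) j = coeff ([:-R,1:]^s) (j - (t-s))" using c by simp
  have j2: "j - (t-s) \<le> s" using assms(2) c2 coeff_Q_gt[of s "j - (t-s)" R]
    by (cases "s < j - (t-s)") auto
  define i where "i = j - (t-s)"
  have ji: "j = (t-s) + i" using j1 i_def by simp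
  have 1: "degree (coeff (Pt s G R t) j) \<le> (s - i) * degree R"
    using c2 coeff_Q_deg[of R s i] i_def by simp
  have 2: "i*(k-1) \<le> i * degree R" using assms(1) by (rule mult_le_mono2)
  have 3: "(s-i)*degree R + i*degree R = s*degree R" using j2 i_def
    by (metis add_mult_distrib le_add_diff_inverse2)
  have 4: "j*(k-1) = (t-s)*(k-1) + i*(k-1)" using ji by (simp add: add_mult_distrib)
  have "Fdeg s (degree G) (degree R) k t = s*degree R + (t-s)*(k-1)"
    using False unfolding Fdeg_def by simp
  then show ?thesis using 1 2 3 4 by linarith
qed

lemma coeffP_attain1:
  fixes G R :: "'a::field poly" and s t :: nat
  assumes "G \<noteq> 0" "R \<noteq> 0" "t < s"
  shows "coeff (Pt s G R t) 0 \<noteq> 0 \<and>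
     degree (coeff (Pt s G R t) 0) + 0*(k-1) = Fdeg s (degree G) (degree R) k t"
proof -
  have c: "coeff (Pt s G R t) 0 = G^(s-t) * (-R)^t"
    using assms by (simp add: Pt_def coeff_Q_0)
  show ?thesis using assms unfolding c Fdeg_def
    by (simp add: degree_mult_eq degree_power_eq)
qed

lemma coeffP_attain2:
  fixes G R :: "'a::field poly" and s t :: nat
  assumes "G \<noteq> 0" "R \<noteq> 0" "\<not> t < s"
  shows "coeff (Pt s G R t) (t-s) \<noteq> 0 \<and>
     degree (coeff (Pt s G R t) (t-s)) + (t-s)*(k-1) = Fdeg s (degree G) (degree R) k t"
proof -
  have c: "coeff (Pt s G R t) (t-s) = (-R)^s"
    using assms by (simp add: Pt_def coeff_monom_mult coeff_Q_0)
  show ?thesis using assms unfolding c Fdeg_def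
    by (simp add: degree_power_eq)
qed

lemma diag_P:
  fixes G R :: "'a::field poly"
  shows "coeff (Pt s G R t) t = (if t < s then G^(s-t) else 1)"
  by (auto simp: Pt_def coeff_Q_top coeff_monom_mult)

lemma upper_P:
  fixes G R :: "'a::field poly"
  shows "t < j \<Longrightarrow> coeff (Pt s G R t) j = 0"
  by (auto simp: Pt_def coeff_Q_gt coeff_monom_mult)


lemma sum_h: "(s::nat) \<le> (L::nat) \<Longrightarrow> 2*(\<Sum>t<L. if t<s then t else s) = (2*L - s - 1)*s"
proof (induction L)
  case 0 then show ?case by simp
next
  case (Suc L)
  show ?case
  proof (cases "s \<le> L")
    case True
    then have "2*(\<Sum>t<Suc L. if t<s then t else s) = (2*L - s - 1)*s + 2*s"
      using Suc by simp
    also have "\<dots> = (2*Suc L - s - 1)*s"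
    proof (cases "s = 0")
      case False
      then have "(2*L - s - 1) + 2 = 2*Suc L - s - 1" using True by arith
      then show ?thesis by (metis add_mult_distrib)
    qed simp
    finally show ?thesis .
  next
    case False
    then have sL: "s = Suc L" using Suc by simp
    have "(\<Sum>t<Suc L. if t<s then t else s) = (\<Sum>t<Suc L. t)"
      using sL by (intro sum.cong) auto
    moreover have "2*(\<Sum>t<Suc L. t) = Suc L * L" by (induction L) auto
    ultimately show ?thesis using sL by (simp add: algebra_simps)
  qed
qed

lemma Gpoly_deg: "degree (Gpoly n alpha) = n" "Gpoly n alpha \<noteq> 0"
proof -
  have "degree (Gpoly n alpha) = (\<Sum>i<n. degree [:- alpha i, 1:])"
    unfolding Gpoly_def by (rule degree_prod_eq_sum_degree) auto
  then show "degree (Gpoly n alpha) = n" by simp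
  show "Gpoly n alpha \<noteq> 0" unfolding Gpoly_def by (simp add: prod_zero_iff)
qed

theorem lemma6:
  fixes alpha w r :: "nat \<Rightarrow> 'a::{finite,field}"
    and R :: "'a poly"
    and n k s l :: nat
  assumes "1 \<le> k" "k < n" "n < card (UNIV :: 'a set)"
    and "inj_on alpha {..<n}" "\<forall>i<n. alpha i \<noteq> 0" "\<forall>i<n. w i \<noteq> 0"
    and "degree R < n" "\<forall>i<n. poly R (alpha i) = r i / w i"
    and "0 < s" "s \<le> l"
    and "\<not> GRS_codeword n k alpha w r"
  shows "real_of_int (Delta (A_mat s l (Gpoly n alpha) R * W_mat l k))
           = real ((2*l - s + 1) * s * (degree R - k + 1)) / 2
       \<and> real_of_int (Delta (A_mat s l (Gpoly n alpha) R * W_mat l k)) \<le> real (l * s * (n - k))"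
proof -
  define G where "G = Gpoly n alpha"
  define M where "M = A_mat s l G R * W_mat l k"
  define d where "d = degree R"
  have dG: "degree G = n" "G \<noteq> 0" unfolding G_def by (rule Gpoly_deg)+
  have kd: "k \<le> d"
  proof (rule ccontr)
    assume "\<not> k \<le> d"
    then have "degree R < k" unfolding d_def by simp
    moreover have "\<forall>i<n. r i = w i * poly R (alpha i)" using assms(6,8) by simp
    ultimately have "GRS_codeword n k alpha w r" unfolding GRS_codeword_def by blast
    then show False using assms(11) by simp
  qed
  have R0: "R \<noteq> 0" using kd assms(1) d_def by auto
  have k1d: "k - 1 \<le> degree R" using kd d_def by simp
  have Mc: "M \<in> carrier_mat (l+1) (l+1)" unfolding M_def by (rule mult_carrier_mat[of _ "l+1" "l+1" _ "l+1"]) (simp_all add: A_mat_def W_mat_def)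
  define F where "F = Fdeg s n d k"
  have rd: "row_deg M t = F t" if t: "t < l+1" for t
  proof -
    have S: "{degree (M $$ (t,j)) | j. j < dim_col M} = (\<lambda>j. degree (M $$ (t,j))) ` {..<l+1}"
      using Mc by auto
    have ent: "degree (M $$ (t,j)) = (if coeff (Pt s G R t) j = 0 then 0 else degree (coeff (Pt s G R t) j) + j*(k-1))"
      if "j < l+1" for j
      unfolding M_def entry_AW[OF t that] by (rule deg_mult_monom)
    show ?thesis unfolding row_deg_def S
    proof (rule Max_eqI)
      fix y assume "y \<in> (\<lambda>j. degree (M $$ (t,j))) ` {..<l+1}"
      then obtain j where j: "j < l+1" "y = degree (M $$ (t,j))" by auto
      show "y \<le> F t"
        using j ent[OF j(1)] coeffP_bound[OF k1d, of s G t j] unfolding F_def d_def dG(1)[symmetric]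
        by (auto split: if_splits)
    next
      show "F t \<in> (\<lambda>j. degree (M $$ (t,j))) ` {..<l+1}"
      proof (cases "t < s")
        case True
        then show ?thesis using coeffP_attain1[OF dG(2) R0 True, of k] ent[of 0]
          unfolding F_def d_def dG(1)[symmetric] by (intro image_eqI[of _ _ 0]) auto
      next
        case False
        have "t - s < l+1" using t by simp
        then show ?thesis using coeffP_attain2[OF dG(2) R0 False, of k] ent[of "t-s"]
          unfolding F_def d_def dG(1)[symmetric] by (intro image_eqI[of _ _ "t-s"]) auto
      qed
    qed simp
  qed
  have md: "mat_deg M = (\<Sum>t<l+1. F t)"
    unfolding mat_deg_def using Mc rd by (intro sum.cong) auto
  define Gd where "Gd t = (if t < s then (s-t)*n else 0) + t*(k-1)" for t
  have diag: "M $$ (t,t) = (if t < s then G^(s-t) else 1) * monom 1 (t*(k-1))" if "t < l+1" for t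
    unfolding M_def entry_AW[OF that that] diag_P by simp
  have detM: "det M = (\<Prod>t\<in>{0..<l+1}. M $$ (t,t))"
  proof -
    have z: "M $$ (i,j) = 0" if "i < j" "j < l+1" for i j
    proof -
      have "i < l+1" using that by simp
      then show ?thesis unfolding M_def entry_AW[OF \<open>i < l+1\<close> that(2)] upper_P[OF that(1)] by simp
    qed
    have "det M = prod_list (diag_mat M)" by (rule det_lower_triangular[OF z Mc])
    then show ?thesis using Mc by (simp add: prod_list_diag_prod)
  qed
  have degdet: "degree (det M) = (\<Sum>t<l+1. Gd t)"
  proof -
    have nz: "\<forall>t\<in>{0..<l+1}. M $$ (t,t) \<noteq> 0" using diag dG(2) by auto
    have "degree (det M) = (\<Sum>t\<in>{0..<l+1}. degree (M $$ (t,t)))"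
      unfolding detM by (rule degree_prod_eq_sum_degree[OF nz])
    also have "\<dots> = (\<Sum>t<l+1. Gd t)"
      using diag dG unfolding Gd_def
      by (intro sum.cong) (auto simp: degree_mult_eq degree_monom_eq degree_power_eq)
    finally show ?thesis .
  qed
  define c where "c = d - (k-1)"
  have FG: "F t = Gd t + (if t<s then t else s) * c" for t
  proof -
    have "(k-1) \<le> d" using kd by simp
    then have e: "t * (k-1) + t * c = t*d" "s*(k-1) + s*c = s*d" unfolding c_def
      by (simp_all add: add_mult_distrib2[symmetric])
    show ?thesis
    proof (cases "t < s")
      case True
      then have "F t = (s-t)*n + t*d" "Gd t = (s-t)*n + t*(k-1)"
        by (simp_all add: F_def Fdeg_def Gd_def)
      then show ?thesis using True e by simp
    next
      case False
      then have f: "F t = s*d + (t-s)*(k-1)" "Gd t = t*(k-1)"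
        by (simp_all add: F_def Fdeg_def Gd_def)
      have "t*(k-1) = (t-s)*(k-1) + s*(k-1)" using False
        by (metis add_mult_distrib le_add_diff_inverse2 not_less)
      then show ?thesis using False e f by simp
    qed
  qed
  define S where "S = (\<Sum>t<l+1. if t<s then t else s)"
  have s1: "(\<Sum>t<l+1. F t) = (\<Sum>t<l+1. Gd t) + (\<Sum>t<l+1. (if t<s then t else s)*c)"
    unfolding FG by (rule sum.distrib)
  have s2: "(\<Sum>t<l+1. (if t<s then t else s)*c) = S*c"
    unfolding S_def by (rule sum_distrib_right[symmetric])
  have "mat_deg M = degree (det M) + c * S"
    unfolding md degdet s1 s2 by simp
  then have D: "Delta M = int (c*S)" unfolding Delta_def by simp
  have S2: "2*S = (2*l - s + 1)*s"
  proof -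
    have e: "2*(l+1) - s - 1 = 2*l - s + 1" using assms(10) by arith
    have "2*S = (2*(l+1) - s - 1)*s" unfolding S_def by (rule sum_h) (use assms(10) in simp)
    then show ?thesis unfolding e .
  qed
  have cd: "degree R - k + 1 = c" unfolding c_def d_def using kd assms(1) d_def by simp
  have eq: "real_of_int (Delta M) = real ((2*l - s + 1) * s * (degree R - k + 1)) / 2"
  proof -
    have "real ((2*l - s + 1) * s * (degree R - k + 1)) = real (2*S*c)" using S2 cd by simp
    then show ?thesis unfolding D by simp
  qed
  have "c \<le> n - k" unfolding c_def d_def using assms(7) kd assms(1) d_def by simp
  moreover have "S \<le> l*s"
  proof -
    have "(2*l - s + 1)*s \<le> (2*l)*s" by (intro mult_le_mono1) (use assms(9,10) in arith)
    then show ?thesis using S2 by simp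
  qed
  ultimately have "c*S \<le> l*s*(n-k)" by (metis mult.commute mult_le_mono)
  then have "real_of_int (Delta M) \<le> real (l * s * (n - k))" unfolding D by (metis of_int_of_nat_eq of_nat_le_iff)
  with eq show ?thesis unfolding M_def G_def by simp
qed

end
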